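(* Let $\mathcal{C}\subseteq\mathbb{R}[x_1,\dots,x_n]$ be a convex cone with apex $0$ which is closed in the LF-topology of $\mathbb{R}[x_1,\dots,x_n]$. Then $\mathfrak{D}_\mathcal{C}\subseteq\mathfrak{d}_\mathcal{C}$.
   Context: $\mathfrak{d}$ is the set of linear maps $\sum_\alpha q_\alpha\partial^\alpha$ on $\mathbb{R}[x_1,\dots,x_n]$ with $q_\alpha$ a polynomial of degree $\le|\alpha|$ for all $\alpha$; $\mathfrak{D}$ is the set of those elements of $\mathfrak{d}$ with trivial kernel. For $A\in\mathfrak{d}$, $e^{tA}=\sum_kt^kA^k/k!$ is well defined since $A$ preserves each space of polynomials of degree $\le d$. $\mathfrak{D}_\mathcal{C}=\{T\in\mathfrak{D}: T\mathcal{C}\subseteq\mathcal{C}\}$ and $\mathfrak{d}_\mathcal{C}=\{A\in\mathfrak{d}: e^{tA}\in\mathfrak{D}_\mathcal{C}\ \forall t\ge0\}$. The LF-topology is the inductive limit topology of the finite-dimensional subspaces of polynomials of degree $\le d$. *)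

theory Defs
  imports "HOL-Analysis.Analysis" "HOL-Library.Poly_Mapping"
begin

type_synonym 'n rpoly = "('n \<Rightarrow>\<^sub>0 nat) \<Rightarrow>\<^sub>0 real"

definition mdeg :: "('n \<Rightarrow>\<^sub>0 nat) \<Rightarrow> nat" where
  "mdeg \<alpha> = (\<Sum>i\<in>Poly_Mapping.keys \<alpha>. Poly_Mapping.lookup \<alpha> i)"

definition deg_le :: "nat \<Rightarrow> 'n rpoly \<Rightarrow> bool" where
  "deg_le d p \<longleftrightarrow> (\<forall>\<alpha>\<in>Poly_Mapping.keys p. mdeg \<alpha> \<le> d)"

definition pdeg :: "'n rpoly \<Rightarrow> nat" where
  "pdeg p = Max (insert 0 (mdeg ` Poly_Mapping.keys p))"

definition smult_rp :: "real \<Rightarrow> 'n rpoly \<Rightarrow> 'n rpoly" where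
  "smult_rp c p = Poly_Mapping.map (\<lambda>x. c * x) p"

definition pder :: "('n \<Rightarrow>\<^sub>0 nat) \<Rightarrow> 'n rpoly \<Rightarrow> 'n rpoly" where
  "pder \<alpha> p = (\<Sum>\<beta>\<in>Poly_Mapping.keys p.
      if (\<forall>i. Poly_Mapping.lookup \<alpha> i \<le> Poly_Mapping.lookup \<beta> i)
      then Poly_Mapping.single (\<beta> - \<alpha>)
             (Poly_Mapping.lookup p \<beta> * (\<Prod>i\<in>Poly_Mapping.keys \<beta>. fact (Poly_Mapping.lookup \<beta> i) / fact (Poly_Mapping.lookup \<beta> i - Poly_Mapping.lookup \<alpha> i)))
      else 0)"

text \<open>The operator sum_alpha q_alpha \<partial>^alpha (terms with |alpha| > deg p vanish on p).\<close>
definition diffop :: "(('n \<Rightarrow>\<^sub>0 nat) \<Rightarrow> 'n rpoly) \<Rightarrow> 'n rpoly \<Rightarrow> 'n rpoly" where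
  "diffop q p = (\<Sum>\<alpha>\<in>{\<alpha>. mdeg \<alpha> \<le> pdeg p}. q \<alpha> * pder \<alpha> p)"

definition dops :: "('n::finite rpoly \<Rightarrow> 'n rpoly) set" where
  "dops = {A. \<exists>q. (\<forall>\<alpha>. deg_le (mdeg \<alpha>) (q \<alpha>)) \<and> A = diffop q}"

definition Dops :: "('n::finite rpoly \<Rightarrow> 'n rpoly) set" where
  "Dops = {T \<in> dops. \<forall>p. T p = 0 \<longrightarrow> p = 0}"

text \<open>e^{tA} = sum_k t^k A^k / k!, defined coefficientwise (the series converges in the
  finite-dimensional space of polynomials of degree \<le> deg p, which A preserves).\<close>
definition expop :: "real \<Rightarrow> ('n rpoly \<Rightarrow> 'n rpoly) \<Rightarrow> 'n rpoly \<Rightarrow> 'n rpoly" where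
  "expop t A p = Abs_poly_mapping (\<lambda>\<beta>. suminf (\<lambda>k. t ^ k / fact k * Poly_Mapping.lookup ((A ^^ k) p) \<beta>))"

definition convex_cone_rp :: "'n rpoly set \<Rightarrow> bool" where
  "convex_cone_rp C \<longleftrightarrow> 0 \<in> C \<and> (\<forall>p\<in>C. \<forall>q\<in>C. p + q \<in> C)
     \<and> (\<forall>c\<ge>0. \<forall>p\<in>C. smult_rp c p \<in> C)"

text \<open>Closed in the LF-topology: the trace on each space of polynomials of degree \<le> d is
  closed (in the Euclidean topology of that finite-dimensional space; we use the product
  topology on coefficient functions, which induces it there).\<close>
definition LF_closed :: "'n::finite rpoly set \<Rightarrow> bool" where
  "LF_closed C \<longleftrightarrow> (\<forall>d. closed (Poly_Mapping.lookup ` {p \<in> C. deg_le d p}))"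

definition Dops_C :: "'n::finite rpoly set \<Rightarrow> ('n rpoly \<Rightarrow> 'n rpoly) set" where
  "Dops_C C = {T \<in> Dops. \<forall>p\<in>C. T p \<in> C}"

definition dops_C :: "'n::finite rpoly set \<Rightarrow> ('n rpoly \<Rightarrow> 'n rpoly) set" where
  "dops_C C = {A \<in> dops. \<forall>t\<ge>0. expop t A \<in> Dops_C C}"

end

theory Submission
  imports Defs
begin

lemma mdeg_UNIV: "mdeg (\<alpha>::'n::finite \<Rightarrow>\<^sub>0 nat) = (\<Sum>i\<in>UNIV. Poly_Mapping.lookup \<alpha> i)"
  unfolding mdeg_def
  by (rule sum.mono_neutral_left) (auto simp: in_keys_iff)

lemma mdeg_add: "mdeg ((\<alpha>::'n::finite \<Rightarrow>\<^sub>0 nat) + \<beta>) = mdeg \<alpha> + mdeg \<beta>"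
  by (simp add: mdeg_UNIV lookup_add sum.distrib)

lemma mdeg_zero [simp]: "mdeg 0 = 0"
  by (simp add: mdeg_def)

lemma mdeg_eq_0: "mdeg (\<alpha>::'n::finite \<Rightarrow>\<^sub>0 nat) = 0 \<longleftrightarrow> \<alpha> = 0"
  by (auto simp: mdeg_UNIV poly_mapping_eq_iff fun_eq_iff)

lemma lookup_le_mdeg: "Poly_Mapping.lookup (\<alpha>::'n::finite \<Rightarrow>\<^sub>0 nat) i \<le> mdeg \<alpha>"
  unfolding mdeg_UNIV by (rule member_le_sum) auto

lemma finite_M: "finite {\<alpha>::'n::finite \<Rightarrow>\<^sub>0 nat. mdeg \<alpha> \<le> d}"
proof -
  have "{\<alpha>::'n::finite \<Rightarrow>\<^sub>0 nat. mdeg \<alpha> \<le> d} \<subseteq> Abs_poly_mapping ` (PiE UNIV (\<lambda>_. {..d}))"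
  proof
    fix \<alpha> :: "'n \<Rightarrow>\<^sub>0 nat" assume "\<alpha> \<in> {\<alpha>. mdeg \<alpha> \<le> d}"
    hence "Poly_Mapping.lookup \<alpha> \<in> PiE UNIV (\<lambda>_. {..d})"
      using lookup_le_mdeg[of \<alpha>] by (auto intro: order_trans)
    thus "\<alpha> \<in> Abs_poly_mapping ` (PiE UNIV (\<lambda>_. {..d}))"
      by (metis image_eqI lookup_inverse)
  qed
  moreover have "finite (PiE (UNIV::'n set) (\<lambda>_. {..d}))" by (rule finite_PiE) auto
  ultimately show ?thesis by (meson finite_imageI finite_subset)
qed

definition mle :: "('n \<Rightarrow>\<^sub>0 nat) \<Rightarrow> ('n \<Rightarrow>\<^sub>0 nat) \<Rightarrow> bool" where
  "mle \<alpha> \<beta> \<longleftrightarrow> (\<forall>i. Poly_Mapping.lookup \<alpha> i \<le> Poly_Mapping.lookup \<beta> i)"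

lemma mle_mdeg: "mle \<alpha> \<beta> \<Longrightarrow> mdeg (\<alpha>::'n::finite \<Rightarrow>\<^sub>0 nat) \<le> mdeg \<beta>"
  unfolding mle_def mdeg_UNIV by (rule sum_mono) auto

lemma mle_diff: "mle \<alpha> \<beta> \<Longrightarrow> (\<beta> - \<alpha>) + \<alpha> = (\<beta>::'n::finite \<Rightarrow>\<^sub>0 nat)"
  unfolding mle_def by (auto simp: poly_mapping_eq_iff fun_eq_iff lookup_add lookup_minus)

lemma mle_diff_mdeg: "mle \<alpha> \<beta> \<Longrightarrow> mdeg (\<beta> - \<alpha>) = mdeg (\<beta>::'n::finite \<Rightarrow>\<^sub>0 nat) - mdeg \<alpha>"
  by (metis mle_diff mdeg_add add_diff_cancel_right')

lemma mle_eq: "mle \<alpha> \<beta> \<Longrightarrow> mdeg \<alpha> = mdeg (\<beta>::'n::finite \<Rightarrow>\<^sub>0 nat) \<Longrightarrow> \<alpha> = \<beta>"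
  by (metis mle_diff mle_diff_mdeg mdeg_eq_0 diff_self_eq_0 add_0)

lemma mle_refl [simp]: "mle \<alpha> \<alpha>" by (simp add: mle_def)


abbreviation cst :: "real \<Rightarrow> 'n rpoly" where "cst c \<equiv> Poly_Mapping.single 0 c"
abbreviation mon :: "('n \<Rightarrow>\<^sub>0 nat) \<Rightarrow> 'n rpoly" where "mon \<beta> \<equiv> Poly_Mapping.single \<beta> 1"
abbreviation MS :: "nat \<Rightarrow> ('n \<Rightarrow>\<^sub>0 nat) set" where "MS d \<equiv> {\<alpha>. mdeg \<alpha> \<le> d}"

lemma lookup_cmul [simp]: "Poly_Mapping.lookup (cst c * p) \<beta> = c * Poly_Mapping.lookup p \<beta>"
  by (simp add: mult_map_scale_conv_mult[symmetric] Poly_Mapping.map.rep_eq when_def)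

lemma smult_rp_cst: "smult_rp c p = cst c * p"
  unfolding smult_rp_def by (metis mult_map_scale_conv_mult)

lemma cst_mon: "cst c * mon \<beta> = Poly_Mapping.single \<beta> c"
  by (simp add: mult_single)

lemma cst_mult: "cst a * cst b = cst (a * b)"
  by (simp add: mult_single)

lemma cst_add: "cst (a + b) = cst a + cst b"
  by (simp add: single_add)

lemma expand_poly:
  assumes "finite S" "Poly_Mapping.keys p \<subseteq> S"
  shows "p = (\<Sum>\<beta>\<in>S. cst (Poly_Mapping.lookup p \<beta>) * mon \<beta>)"
proof (rule poly_mapping_eqI)
  fix k
  have "(\<Sum>\<beta>\<in>S. Poly_Mapping.lookup (cst (Poly_Mapping.lookup p \<beta>) * mon \<beta>) k)
     = (\<Sum>\<beta>\<in>S. if \<beta> = k then Poly_Mapping.lookup p k else 0)"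
    by (rule sum.cong) (auto simp: lookup_single when_def)
  also have "\<dots> = Poly_Mapping.lookup p k"
    using assms by (auto simp: in_keys_iff)
  finally show "Poly_Mapping.lookup p k = Poly_Mapping.lookup (\<Sum>\<beta>\<in>S. cst (Poly_Mapping.lookup p \<beta>) * mon \<beta>) k"
    by (simp add: lookup_sum)
qed

definition lin :: "('n rpoly \<Rightarrow> 'n rpoly) \<Rightarrow> bool" where
  "lin L \<longleftrightarrow> (\<forall>p r. L (p + r) = L p + L r) \<and> (\<forall>c p. L (cst c * p) = cst c * L p)"

lemma lin_add: "lin L \<Longrightarrow> L (p + r) = L p + L r" by (simp add: lin_def)
lemma lin_cmul: "lin L \<Longrightarrow> L (cst c * p) = cst c * L p" by (simp add: lin_def)
lemma lin_zero: "lin L \<Longrightarrow> L 0 = 0"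
  by (metis lin_cmul mult_zero_left single_zero)
lemma lin_sum: "lin L \<Longrightarrow> L (sum f S) = (\<Sum>x\<in>S. L (f x))"
  by (induction S rule: infinite_finite_induct) (auto simp: lin_zero lin_add)

lemma lin_expand:
  assumes "lin L" "finite S" "Poly_Mapping.keys p \<subseteq> S"
  shows "L p = (\<Sum>\<beta>\<in>S. cst (Poly_Mapping.lookup p \<beta>) * L (mon \<beta>))"
  by (subst expand_poly[OF assms(2,3)]) (simp add: lin_sum[OF assms(1)] lin_cmul[OF assms(1)])

lemma lin_comp: "lin L \<Longrightarrow> lin K \<Longrightarrow> lin (L \<circ> K)"
  by (simp add: lin_def)

lemma lin_id: "lin id" by (simp add: lin_def)

lemma lin_pow: "lin L \<Longrightarrow> lin (L ^^ k)"
  by (induction k) (auto simp: lin_id lin_comp)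

lemma lin_eqI:
  assumes "lin L" "lin K" "\<And>\<beta>. L (mon \<beta>) = K (mon \<beta>)"
  shows "L = K"
proof
  fix p
  have "L p = (\<Sum>\<beta>\<in>Poly_Mapping.keys p. cst (Poly_Mapping.lookup p \<beta>) * L (mon \<beta>))"
    by (rule lin_expand[OF assms(1) finite_keys subset_refl])
  also have "\<dots> = (\<Sum>\<beta>\<in>Poly_Mapping.keys p. cst (Poly_Mapping.lookup p \<beta>) * K (mon \<beta>))"
    using assms(3) by simp
  also have "\<dots> = K p"
    by (rule lin_expand[OF assms(2) finite_keys subset_refl, symmetric])
  finally show "L p = K p" .
qed

subsection \<open>Degrees\<close>

lemma deg_le_iff: "deg_le d p \<longleftrightarrow> Poly_Mapping.keys p \<subseteq> MS d"
  by (auto simp: deg_le_def)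

lemma deg_le_zero [simp]: "deg_le d 0" by (simp add: deg_le_def)

lemma deg_le_add: "deg_le d p \<Longrightarrow> deg_le d r \<Longrightarrow> deg_le d (p + r)"
  using keys_add[of p r] by (auto simp: deg_le_def)

lemma deg_le_sum: "(\<And>x. x \<in> S \<Longrightarrow> deg_le d (f x)) \<Longrightarrow> deg_le d (sum f S)"
  by (induction S rule: infinite_finite_induct) (auto intro: deg_le_add)

lemma deg_le_mono: "deg_le d p \<Longrightarrow> d \<le> e \<Longrightarrow> deg_le e p"
  by (auto simp: deg_le_def)

lemma deg_le_mult:
  assumes "deg_le a p" "deg_le b (r::'n::finite rpoly)"
  shows "deg_le (a + b) (p * r)"
  unfolding deg_le_def
proof
  fix \<gamma> assume "\<gamma> \<in> Poly_Mapping.keys (p * r)"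
  then obtain x y where "\<gamma> = x + y" "x \<in> Poly_Mapping.keys p" "y \<in> Poly_Mapping.keys r"
    using keys_mult[of p r] by blast
  moreover have "mdeg x \<le> a" "mdeg y \<le> b" using assms \<open>x \<in> _\<close> \<open>y \<in> _\<close> by (auto simp: deg_le_def)
  ultimately show "mdeg \<gamma> \<le> a + b" by (simp add: mdeg_add)
qed

lemma deg_le_cmul: "deg_le d p \<Longrightarrow> deg_le d (cst c * (p::'n::finite rpoly))"
  using deg_le_mult[of 0 "cst c" d p] by (auto simp: deg_le_def)

lemma deg_le_single: "deg_le (mdeg \<beta>) (Poly_Mapping.single \<beta> c)"
  by (simp add: deg_le_def)

lemma deg_le_pdeg: "deg_le (pdeg p) p"
  unfolding deg_le_def pdeg_def by (auto intro: Max_ge)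

lemma pdeg_le: "deg_le d p \<Longrightarrow> pdeg p \<le> d"
  unfolding deg_le_def pdeg_def by (subst Max_le_iff) auto

lemma deg_le_lookup: "deg_le d p \<Longrightarrow> \<not> mdeg \<beta> \<le> d \<Longrightarrow> Poly_Mapping.lookup p \<beta> = 0"
  by (auto simp: deg_le_def in_keys_iff)


definition cf :: "('n \<Rightarrow>\<^sub>0 nat) \<Rightarrow> ('n \<Rightarrow>\<^sub>0 nat) \<Rightarrow> real" where
  "cf \<alpha> \<beta> = (\<Prod>i\<in>Poly_Mapping.keys \<beta>. fact (Poly_Mapping.lookup \<beta> i) / fact (Poly_Mapping.lookup \<beta> i - Poly_Mapping.lookup \<alpha> i))"

definition pd :: "('n \<Rightarrow>\<^sub>0 nat) \<Rightarrow> ('n \<Rightarrow>\<^sub>0 nat) \<Rightarrow> real \<Rightarrow> 'n rpoly" where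
  "pd \<alpha> \<beta> c = (if mle \<alpha> \<beta> then Poly_Mapping.single (\<beta> - \<alpha>) (c * cf \<alpha> \<beta>) else 0)"

lemma pder_eq: "pder \<alpha> p = (\<Sum>\<beta>\<in>Poly_Mapping.keys p. pd \<alpha> \<beta> (Poly_Mapping.lookup p \<beta>))"
  unfolding pder_def pd_def cf_def mle_def by simp

lemma pd_zero [simp]: "pd \<alpha> \<beta> 0 = 0" by (simp add: pd_def)

lemma pd_add: "pd \<alpha> \<beta> (a + b) = pd \<alpha> \<beta> a + pd \<alpha> \<beta> b"
  by (simp add: pd_def distrib_right single_add)

lemma pd_cmul: "pd \<alpha> \<beta> (c * a) = cst c * pd \<alpha> \<beta> a"
  by (simp add: pd_def mult_single mult.assoc)

lemma pder_superset:
  assumes "finite S" "Poly_Mapping.keys p \<subseteq> S"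
  shows "pder \<alpha> p = (\<Sum>\<beta>\<in>S. pd \<alpha> \<beta> (Poly_Mapping.lookup p \<beta>))"
  unfolding pder_eq using assms
  by (intro sum.mono_neutral_left) (auto simp: in_keys_iff)

lemma keys_cmul_sub: "Poly_Mapping.keys (cst c * p) \<subseteq> Poly_Mapping.keys p"
  by (auto simp: in_keys_iff)

lemma lin_pder: "lin (pder \<alpha>)"
  unfolding lin_def
proof (intro conjI allI)
  fix p r :: "'a rpoly"
  let ?S = "Poly_Mapping.keys p \<union> Poly_Mapping.keys r"
  have "pder \<alpha> (p + r) = (\<Sum>\<beta>\<in>?S. pd \<alpha> \<beta> (Poly_Mapping.lookup (p + r) \<beta>))"
    using keys_add[of p r] by (intro pder_superset) auto
  also have "\<dots> = (\<Sum>\<beta>\<in>?S. pd \<alpha> \<beta> (Poly_Mapping.lookup p \<beta>)) + (\<Sum>\<beta>\<in>?S. pd \<alpha> \<beta> (Poly_Mapping.lookup r \<beta>))"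
    by (simp add: lookup_add pd_add sum.distrib)
  also have "\<dots> = pder \<alpha> p + pder \<alpha> r"
    by (subst (1 2) pder_superset[of ?S]) auto
  finally show "pder \<alpha> (p + r) = pder \<alpha> p + pder \<alpha> r" .
next
  fix c and p :: "'a rpoly"
  have "pder \<alpha> (cst c * p) = (\<Sum>\<beta>\<in>Poly_Mapping.keys p. pd \<alpha> \<beta> (Poly_Mapping.lookup (cst c * p) \<beta>))"
    using keys_cmul_sub by (intro pder_superset) auto
  also have "\<dots> = cst c * pder \<alpha> p"
    by (simp add: pd_cmul pder_eq sum_distrib_left)
  finally show "pder \<alpha> (cst c * p) = cst c * pder \<alpha> p" .
qed

lemma pder_vanish: "(\<And>\<beta>. \<beta> \<in> Poly_Mapping.keys p \<Longrightarrow> \<not> mle \<alpha> \<beta>) \<Longrightarrow> pder \<alpha> p = 0"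
  unfolding pder_eq by (intro sum.neutral) (auto simp: pd_def)

lemma pder_vanish_deg:
  assumes "\<not> mdeg \<alpha> \<le> pdeg (p::'n::finite rpoly)"
  shows "pder \<alpha> p = 0"
proof (rule pder_vanish)
  fix \<beta> assume "\<beta> \<in> Poly_Mapping.keys p"
  hence "mdeg \<beta> \<le> pdeg p" using deg_le_pdeg[of p] by (auto simp: deg_le_def)
  thus "\<not> mle \<alpha> \<beta>" using assms mle_mdeg by force
qed

lemma deg_le_pd: "mdeg (\<beta>::'n::finite \<Rightarrow>\<^sub>0 nat) \<le> d \<Longrightarrow> deg_le (d - mdeg \<alpha>) (pd \<alpha> \<beta> c)"
proof (cases "mle \<alpha> \<beta>")
  case True
  assume "mdeg \<beta> \<le> d"
  hence "mdeg (\<beta> - \<alpha>) \<le> d - mdeg \<alpha>" using mle_diff_mdeg[OF True] by simp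
  thus ?thesis using True deg_le_mono[OF deg_le_single[of "\<beta> - \<alpha>"]] by (simp add: pd_def)
qed (simp add: pd_def)

lemma deg_le_pder: "deg_le d (p::'n::finite rpoly) \<Longrightarrow> deg_le (d - mdeg \<alpha>) (pder \<alpha> p)"
  unfolding pder_eq by (intro deg_le_sum deg_le_pd) (auto simp: deg_le_def)

lemma pder_mon: "pder \<alpha> (mon \<beta>) = pd \<alpha> \<beta> 1"
  by (simp add: pder_eq)

lemma cf_self_pos: "cf \<alpha> \<alpha> > 0"
  unfolding cf_def by (intro prod_pos) auto

lemma pd_self: "pd \<alpha> \<alpha> 1 = cst (cf \<alpha> \<alpha>)"
  by (simp add: pd_def)

lemma pd_nonle: "\<not> mle \<alpha> \<beta> \<Longrightarrow> pd \<alpha> \<beta> c = 0"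
  by (simp add: pd_def)

lemma diffop_superset:
  assumes "deg_le d (p::'n::finite rpoly)"
  shows "diffop q p = (\<Sum>\<alpha>\<in>MS d. q \<alpha> * pder \<alpha> p)"
  unfolding diffop_def
  using pdeg_le[OF assms] pder_vanish_deg[of _ p]
  by (intro sum.mono_neutral_left finite_M) auto

lemma lin_diffop: "lin (diffop (q :: ('n::finite \<Rightarrow>\<^sub>0 nat) \<Rightarrow> 'n rpoly))"
  unfolding lin_def
proof (intro conjI allI)
  fix p r :: "'n rpoly"
  define d where "d = max (pdeg p) (pdeg r)"
  have dp: "deg_le d p" "deg_le d r"
    using deg_le_pdeg[of p] deg_le_pdeg[of r] by (auto simp: d_def intro: deg_le_mono)
  hence "deg_le d (p + r)" by (rule deg_le_add)
  thus "diffop q (p + r) = diffop q p + diffop q r"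
    using dp by (simp add: diffop_superset lin_add[OF lin_pder] distrib_left sum.distrib)
next
  fix c and p :: "'n rpoly"
  have "deg_le (pdeg p) (cst c * p)" by (rule deg_le_cmul[OF deg_le_pdeg])
  thus "diffop q (cst c * p) = cst c * diffop q p"
    using deg_le_pdeg[of p]
    by (simp add: diffop_superset lin_cmul[OF lin_pder] sum_distrib_left mult.left_commute)
qed

lemma deg_le_diffop:
  assumes "\<And>\<alpha>. deg_le (mdeg \<alpha>) (q \<alpha>)" "deg_le d (p::'n::finite rpoly)"
  shows "deg_le d (diffop q p)"
  unfolding diffop_superset[OF assms(2)]
proof (rule deg_le_sum)
  fix \<alpha> :: "'n \<Rightarrow>\<^sub>0 nat" assume "\<alpha> \<in> MS d"
  hence "deg_le (mdeg \<alpha> + (d - mdeg \<alpha>)) (q \<alpha> * pder \<alpha> p)"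
    by (intro deg_le_mult assms deg_le_pder)
  thus "deg_le d (q \<alpha> * pder \<alpha> p)" using \<open>\<alpha> \<in> MS d\<close> by simp
qed

definition degpres :: "('n rpoly \<Rightarrow> 'n rpoly) \<Rightarrow> bool" where
  "degpres L \<longleftrightarrow> (\<forall>d p. deg_le d p \<longrightarrow> deg_le d (L p))"

lemma dops_lin: "A \<in> dops \<Longrightarrow> lin A"
  by (auto simp: dops_def lin_diffop)

lemma dops_degpres: "A \<in> dops \<Longrightarrow> degpres A"
  by (auto simp: dops_def degpres_def deg_le_diffop)

lemma degpres_pow: "degpres L \<Longrightarrow> degpres (L ^^ k)"
  by (induction k) (auto simp: degpres_def)


function qf :: "('n::finite rpoly \<Rightarrow> 'n rpoly) \<Rightarrow> ('n \<Rightarrow>\<^sub>0 nat) \<Rightarrow> 'n rpoly" where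
  "qf L \<alpha> = cst (1 / cf \<alpha> \<alpha>) * (L (mon \<alpha>) - (\<Sum>\<beta>\<in>{\<beta>. mdeg \<beta> < mdeg \<alpha>}. qf L \<beta> * pder \<beta> (mon \<alpha>)))"
  by auto
termination by (relation "Wellfounded.measure (\<lambda>(L, \<alpha>). mdeg \<alpha>)") auto

declare qf.simps [simp del]

lemma deg_le_diff: "deg_le d p \<Longrightarrow> deg_le d r \<Longrightarrow> deg_le d (p - r)"
proof -
  assume a: "deg_le d p" "deg_le d r"
  have "Poly_Mapping.keys (p - r) \<subseteq> Poly_Mapping.keys p \<union> Poly_Mapping.keys r"
    by (auto simp: in_keys_iff lookup_minus)
  thus ?thesis using a by (auto simp: deg_le_def)
qed

lemma finite_Mlt: "finite {\<beta>::'n::finite \<Rightarrow>\<^sub>0 nat. mdeg \<beta> < m}"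
  by (rule finite_subset[OF _ finite_M[of m]]) auto

lemma deg_le_qf:
  fixes L :: "'n::finite rpoly \<Rightarrow> 'n rpoly"
  assumes "degpres L"
  shows "deg_le (mdeg \<alpha>) (qf L \<alpha>)"
proof (induction "mdeg \<alpha>" arbitrary: \<alpha> rule: less_induct)
  case less
  have "deg_le (mdeg \<alpha>) (L (mon \<alpha>))"
    using assms deg_le_single[of \<alpha> 1] by (auto simp: degpres_def)
  moreover have "deg_le (mdeg \<alpha>) (\<Sum>\<beta>\<in>{\<beta>. mdeg \<beta> < mdeg \<alpha>}. qf L \<beta> * pder \<beta> (mon \<alpha>))"
  proof (rule deg_le_sum)
    fix \<beta> :: "'n \<Rightarrow>\<^sub>0 nat" assume b: "\<beta> \<in> {\<beta>. mdeg \<beta> < mdeg \<alpha>}"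
    hence "deg_le (mdeg \<beta> + (mdeg \<alpha> - mdeg \<beta>)) (qf L \<beta> * pder \<beta> (mon \<alpha>))"
      by (intro deg_le_mult less deg_le_pder deg_le_single) auto
    thus "deg_le (mdeg \<alpha>) (qf L \<beta> * pder \<beta> (mon \<alpha>))" using b by simp
  qed
  ultimately show ?case
    by (subst qf.simps) (intro deg_le_cmul deg_le_diff)
qed

lemma diffop_qf_mon:
  fixes L :: "'n::finite rpoly \<Rightarrow> 'n rpoly"
  shows "diffop (qf L) (mon \<alpha>) = L (mon \<alpha>)"
proof -
  let ?f = "\<lambda>\<beta>. qf L \<beta> * pder \<beta> (mon \<alpha>)"
  let ?m = "mdeg \<alpha>"
  have split: "MS ?m = {\<beta>. mdeg \<beta> < ?m} \<union> {\<beta>. mdeg \<beta> = ?m}" by auto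
  have fin2: "finite {\<beta>::'n \<Rightarrow>\<^sub>0 nat. mdeg \<beta> = ?m}"
    by (rule finite_subset[OF _ finite_M[of ?m]]) auto
  have "diffop (qf L) (mon \<alpha>) = sum ?f (MS ?m)"
    by (rule diffop_superset[OF deg_le_single])
  also have "\<dots> = sum ?f {\<beta>. mdeg \<beta> < ?m} + sum ?f {\<beta>. mdeg \<beta> = ?m}"
    unfolding split by (rule sum.union_disjoint[OF finite_Mlt fin2]) auto
  also have "sum ?f {\<beta>. mdeg \<beta> = ?m} = sum (\<lambda>\<beta>. if \<beta> = \<alpha> then ?f \<alpha> else 0) {\<beta>. mdeg \<beta> = ?m}"
  proof (rule sum.cong)
    fix \<beta> :: "'n \<Rightarrow>\<^sub>0 nat" assume "\<beta> \<in> {\<beta>. mdeg \<beta> = ?m}"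
    hence "\<beta> \<noteq> \<alpha> \<Longrightarrow> \<not> mle \<beta> \<alpha>" using mle_eq by auto
    thus "?f \<beta> = (if \<beta> = \<alpha> then ?f \<alpha> else 0)"
      by (auto simp: pder_mon pd_nonle)
  qed simp
  also have "\<dots> = ?f \<alpha>" using fin2 by (simp add: sum.delta')
  also have "?f \<alpha> = qf L \<alpha> * cst (cf \<alpha> \<alpha>)" by (simp add: pder_mon pd_self)
  also have "\<dots> = L (mon \<alpha>) - sum ?f {\<beta>. mdeg \<beta> < ?m}"
  proof -
    have one: "cst (cf \<alpha> \<alpha>) * cst (1 / cf \<alpha> \<alpha>) = (1::'n rpoly)"
      using cf_self_pos[of \<alpha>] by (simp add: cst_mult)
    have "qf L \<alpha> * cst (cf \<alpha> \<alpha>) = cst (cf \<alpha> \<alpha>) * qf L \<alpha>" by (rule mult.commute)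
    also have "\<dots> = (cst (cf \<alpha> \<alpha>) * cst (1 / cf \<alpha> \<alpha>)) * (L (mon \<alpha>) - sum ?f {\<beta>. mdeg \<beta> < ?m})"
      by (subst qf.simps) (simp only: mult.assoc)
    finally show ?thesis unfolding one by simp
  qed
  finally show ?thesis by simp
qed

lemma char_dops:
  fixes L :: "'n::finite rpoly \<Rightarrow> 'n rpoly"
  assumes "lin L" "degpres L"
  shows "L \<in> dops"
  unfolding dops_def
proof (intro CollectI exI conjI allI)
  show "deg_le (mdeg \<alpha>) (qf L \<alpha>)" for \<alpha> by (rule deg_le_qf[OF assms(2)])
  show "L = diffop (qf L)"
    by (rule lin_eqI[OF assms(1) lin_diffop]) (simp add: diffop_qf_mon)
qed


definition nrm :: "nat \<Rightarrow> 'n::finite rpoly \<Rightarrow> real" where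
  "nrm d p = (\<Sum>\<beta>\<in>MS d. \<bar>Poly_Mapping.lookup p \<beta>\<bar>)"

lemma nrm_nonneg: "0 \<le> nrm d p"
  unfolding nrm_def by (rule sum_nonneg) auto

lemma nrm_zero [simp]: "nrm d 0 = 0"
  by (simp add: nrm_def)

lemma nrm_add: "nrm d (p + r) \<le> nrm d p + nrm d r"
  unfolding nrm_def sum.distrib[symmetric] by (rule sum_mono) (simp add: lookup_add abs_triangle_ineq)

lemma nrm_cmul: "nrm d (cst c * p) = \<bar>c\<bar> * nrm d p"
  unfolding nrm_def by (simp add: abs_mult sum_distrib_left)

lemma nrm_sum: "nrm d (sum f S) \<le> (\<Sum>x\<in>S. nrm d (f x))"
proof (induction S rule: infinite_finite_induct)
  case (insert x F)
  thus ?case using nrm_add[of d "f x" "sum f F"] by simp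
qed simp_all

lemma lookup_le_nrm: "mdeg \<beta> \<le> d \<Longrightarrow> \<bar>Poly_Mapping.lookup (p::'n::finite rpoly) \<beta>\<bar> \<le> nrm d p"
  unfolding nrm_def by (rule member_le_sum[OF _ _ finite_M]) auto

lemma op_bound:
  fixes L :: "'n::finite rpoly \<Rightarrow> 'n rpoly"
  assumes "lin L"
  shows "\<exists>K\<ge>0. \<forall>p. deg_le d p \<longrightarrow> nrm d (L p) \<le> K * nrm d p"
proof (intro exI conjI allI impI)
  define K where "K = (\<Sum>\<gamma>\<in>MS d. nrm d (L (mon \<gamma>)))"
  show "0 \<le> K" unfolding K_def by (intro sum_nonneg nrm_nonneg)
  fix p :: "'n rpoly" assume p: "deg_le d p"
  have "L p = (\<Sum>\<gamma>\<in>MS d. cst (Poly_Mapping.lookup p \<gamma>) * L (mon \<gamma>))"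
    by (rule lin_expand[OF assms finite_M]) (use p in \<open>simp add: deg_le_iff\<close>)
  hence "nrm d (L p) \<le> (\<Sum>\<gamma>\<in>MS d. nrm d (cst (Poly_Mapping.lookup p \<gamma>) * L (mon \<gamma>)))"
    by (simp only: nrm_sum)
  also have "\<dots> = (\<Sum>\<gamma>\<in>MS d. \<bar>Poly_Mapping.lookup p \<gamma>\<bar> * nrm d (L (mon \<gamma>)))"
    by (simp add: nrm_cmul)
  also have "\<dots> \<le> (\<Sum>\<gamma>\<in>MS d. nrm d p * nrm d (L (mon \<gamma>)))"
    by (intro sum_mono mult_right_mono lookup_le_nrm nrm_nonneg) auto
  also have "\<dots> = K * nrm d p" by (simp add: K_def sum_distrib_left mult.commute)
  finally show "nrm d (L p) \<le> K * nrm d p" .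
qed

lemma funpow_Suc_apply: "(A ^^ Suc k) p = A ((A ^^ k) p)"
  by simp

lemma pow_bound:
  fixes A :: "'n::finite rpoly \<Rightarrow> 'n rpoly"
  assumes "degpres A" "K \<ge> 0" "\<And>p. deg_le d p \<Longrightarrow> nrm d (A p) \<le> K * nrm d p" "deg_le d p"
  shows "nrm d ((A ^^ k) p) \<le> K ^ k * nrm d p"
proof (induction k)
  case (Suc k)
  have "deg_le d ((A ^^ k) p)" using degpres_pow[OF assms(1)] assms(4) by (auto simp: degpres_def)
  hence "nrm d ((A ^^ Suc k) p) \<le> K * nrm d ((A ^^ k) p)" using assms(3) by simp
  also have "\<dots> \<le> K * (K ^ k * nrm d p)" by (rule mult_left_mono[OF Suc assms(2)])
  finally show ?case by simp
qed simp

lemma coeff_bound: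
  fixes A :: "'n::finite rpoly \<Rightarrow> 'n rpoly"
  assumes "lin A" "degpres A"
  shows "\<exists>K\<ge>0. \<forall>k \<beta>. \<bar>Poly_Mapping.lookup ((A ^^ k) p) \<beta>\<bar> \<le> K ^ k * nrm (pdeg p) p"
proof -
  let ?d = "pdeg p"
  obtain K where K: "K \<ge> 0" "\<And>p. deg_le ?d p \<Longrightarrow> nrm ?d (A p) \<le> K * nrm ?d p"
    using op_bound[OF assms(1), of ?d] by blast
  show ?thesis
  proof (intro exI conjI allI)
    fix k \<beta>
    have dk: "deg_le ?d ((A ^^ k) p)"
      using degpres_pow[OF assms(2)] deg_le_pdeg[of p] by (auto simp: degpres_def)
    show "\<bar>Poly_Mapping.lookup ((A ^^ k) p) \<beta>\<bar> \<le> K ^ k * nrm ?d p"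
    proof (cases "mdeg \<beta> \<le> ?d")
      case True
      thus ?thesis using lookup_le_nrm[OF True, of "(A ^^ k) p"]
          pow_bound[OF assms(2) K(1) K(2) deg_le_pdeg[of p], of k] by linarith
    next
      case False
      thus ?thesis using deg_le_lookup[OF dk False] K(1) nrm_nonneg[of "pdeg p" p] by simp
    qed
  qed (rule K(1))
qed

lemma summable_ser_abs:
  fixes A :: "'n::finite rpoly \<Rightarrow> 'n rpoly"
  assumes "lin A" "degpres A"
  shows "summable (\<lambda>k. \<bar>t ^ k / fact k * Poly_Mapping.lookup ((A ^^ k) p) \<beta>\<bar>)"
proof -
  obtain K where K: "K \<ge> 0" "\<And>k \<beta>. \<bar>Poly_Mapping.lookup ((A ^^ k) p) \<beta>\<bar> \<le> K ^ k * nrm (pdeg p) p"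
    using coeff_bound[OF assms] by blast
  let ?N = "nrm (pdeg p) p"
  have s: "summable (\<lambda>k. inverse (fact k) * (\<bar>t\<bar> * K) ^ k * ?N)"
    by (intro summable_mult2 summable_exp)
  show ?thesis
  proof (rule summable_comparison_test[OF _ s], intro exI allI impI)
    fix k :: nat
    have "\<bar>t ^ k / fact k * Poly_Mapping.lookup ((A ^^ k) p) \<beta>\<bar>
        = \<bar>t\<bar> ^ k / fact k * \<bar>Poly_Mapping.lookup ((A ^^ k) p) \<beta>\<bar>"
      by (simp add: abs_mult power_abs)
    also have "\<dots> \<le> \<bar>t\<bar> ^ k / fact k * (K ^ k * ?N)"
      by (intro mult_left_mono K(2)) auto
    also have "\<dots> = inverse (fact k) * (\<bar>t\<bar> * K) ^ k * ?N"
      by (simp add: power_mult_distrib divide_inverse mult_ac)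
    finally show "norm \<bar>t ^ k / fact k * Poly_Mapping.lookup ((A ^^ k) p) \<beta>\<bar>
        \<le> inverse (fact k) * (\<bar>t\<bar> * K) ^ k * ?N" by simp
  qed
qed

lemma summable_ser:
  fixes A :: "'n::finite rpoly \<Rightarrow> 'n rpoly"
  assumes "lin A" "degpres A"
  shows "summable (\<lambda>k. t ^ k / fact k * Poly_Mapping.lookup ((A ^^ k) p) \<beta>)"
  by (rule summable_rabs_cancel[OF summable_ser_abs[OF assms]])

lemma lookup_expop:
  fixes A :: "'n::finite rpoly \<Rightarrow> 'n rpoly"
  assumes "lin A" "degpres A"
  shows "Poly_Mapping.lookup (expop t A p) \<beta> = suminf (\<lambda>k. t ^ k / fact k * Poly_Mapping.lookup ((A ^^ k) p) \<beta>)"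
proof -
  let ?f = "\<lambda>\<beta>. suminf (\<lambda>k. t ^ k / fact k * Poly_Mapping.lookup ((A ^^ k) p) \<beta>)"
  have "{\<beta>. ?f \<beta> \<noteq> 0} \<subseteq> MS (pdeg p)"
  proof
    fix \<beta> assume "\<beta> \<in> {\<beta>. ?f \<beta> \<noteq> 0}"
    moreover have "\<not> mdeg \<beta> \<le> pdeg p \<Longrightarrow> ?f \<beta> = 0"
    proof -
      assume nb: "\<not> mdeg \<beta> \<le> pdeg p"
      have "\<And>k. Poly_Mapping.lookup ((A ^^ k) p) \<beta> = 0"
      proof -
        fix k
        have "deg_le (pdeg p) ((A ^^ k) p)"
          using degpres_pow[OF assms(2), of k] deg_le_pdeg[of p] unfolding degpres_def by blast
        thus "Poly_Mapping.lookup ((A ^^ k) p) \<beta> = 0" using nb by (rule deg_le_lookup)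
      qed
      thus "?f \<beta> = 0" by simp
    qed
    ultimately show "\<beta> \<in> MS (pdeg p)" by auto
  qed
  hence "finite {\<beta>. ?f \<beta> \<noteq> 0}" by (rule finite_subset[OF _ finite_M])
  thus ?thesis unfolding expop_def by simp
qed


lemma lin_expop:
  fixes A :: "'n::finite rpoly \<Rightarrow> 'n rpoly"
  assumes "lin A" "degpres A"
  shows "lin (expop t A)"
  unfolding lin_def
proof (intro conjI allI)
  fix p r :: "'n rpoly"
  show "expop t A (p + r) = expop t A p + expop t A r"
  proof (rule poly_mapping_eqI)
    fix \<beta>
    show "Poly_Mapping.lookup (expop t A (p + r)) \<beta> = Poly_Mapping.lookup (expop t A p + expop t A r) \<beta>"
    proof -
      have eq: "(\<lambda>k. t ^ k / fact k * Poly_Mapping.lookup ((A ^^ k) (p + r)) \<beta>)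
         = (\<lambda>k. t ^ k / fact k * Poly_Mapping.lookup ((A ^^ k) p) \<beta> + t ^ k / fact k * Poly_Mapping.lookup ((A ^^ k) r) \<beta>)"
        by (simp add: lin_add[OF lin_pow[OF assms(1)]] lookup_add distrib_left)
      show ?thesis
        unfolding lookup_add lookup_expop[OF assms] eq
        by (rule suminf_add[symmetric, OF summable_ser[OF assms] summable_ser[OF assms]])
    qed
  qed
next
  fix c and p :: "'n rpoly"
  show "expop t A (cst c * p) = cst c * expop t A p"
  proof (rule poly_mapping_eqI)
    fix \<beta>
    show "Poly_Mapping.lookup (expop t A (cst c * p)) \<beta> = Poly_Mapping.lookup (cst c * expop t A p) \<beta>"
    proof -
      have eq: "(\<lambda>k. t ^ k / fact k * Poly_Mapping.lookup ((A ^^ k) (cst c * p)) \<beta>)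
         = (\<lambda>k. c * (t ^ k / fact k * Poly_Mapping.lookup ((A ^^ k) p) \<beta>))"
        by (simp add: lin_cmul[OF lin_pow[OF assms(1)]] mult.left_commute[of _ c])
      show ?thesis
        unfolding lookup_cmul lookup_expop[OF assms] eq
        by (rule suminf_mult[OF summable_ser[OF assms]])
    qed
  qed
qed

lemma degpres_expop:
  fixes A :: "'n::finite rpoly \<Rightarrow> 'n rpoly"
  assumes "lin A" "degpres A"
  shows "degpres (expop t A)"
  unfolding degpres_def
proof (intro allI impI)
  fix d and p :: "'n rpoly"
  assume p: "deg_le d p"
  show "deg_le d (expop t A p)"
    unfolding deg_le_def
  proof (rule ccontr)
    assume "\<not> (\<forall>\<alpha>\<in>Poly_Mapping.keys (expop t A p). mdeg \<alpha> \<le> d)"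
    then obtain \<beta> where b: "\<beta> \<in> Poly_Mapping.keys (expop t A p)" "\<not> mdeg \<beta> \<le> d" by blast
    have "\<And>k. Poly_Mapping.lookup ((A ^^ k) p) \<beta> = 0"
    proof -
      fix k
      have "deg_le d ((A ^^ k) p)"
        using degpres_pow[OF assms(2), of k] p unfolding degpres_def by blast
      thus "Poly_Mapping.lookup ((A ^^ k) p) \<beta> = 0" using b(2) by (rule deg_le_lookup)
    qed
    hence "Poly_Mapping.lookup (expop t A p) \<beta> = 0" by (simp add: lookup_expop[OF assms])
    thus False using b(1) by (simp add: in_keys_iff)
  qed
qed

lemma expop_dops:
  fixes A :: "'n::finite rpoly \<Rightarrow> 'n rpoly"
  assumes "A \<in> dops"
  shows "expop t A \<in> dops"
  using assms by (intro char_dops lin_expop degpres_expop) (auto intro: dops_lin dops_degpres)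

lemma lookup_lin_expand:
  fixes L :: "'n::finite rpoly \<Rightarrow> 'n rpoly"
  assumes "lin L" "deg_le d r"
  shows "Poly_Mapping.lookup (L r) \<beta> = (\<Sum>\<gamma>\<in>MS d. Poly_Mapping.lookup r \<gamma> * Poly_Mapping.lookup (L (mon \<gamma>)) \<beta>)"
proof -
  have "L r = (\<Sum>\<gamma>\<in>MS d. cst (Poly_Mapping.lookup r \<gamma>) * L (mon \<gamma>))"
    by (rule lin_expand[OF assms(1) finite_M]) (use assms(2) in \<open>simp add: deg_le_iff\<close>)
  thus ?thesis by (simp add: lookup_sum)
qed

lemma binom_fact_sum:
  fixes s t :: real
  shows "(s + t) ^ n / fact n = (\<Sum>i\<le>n. s ^ i / fact i * (t ^ (n - i) / fact (n - i)))"
proof -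
  have "(s + t) ^ n / fact n = (\<Sum>i\<le>n. of_nat (n choose i) * s ^ i * t ^ (n - i) / fact n)"
    by (simp add: binomial_ring sum_divide_distrib)
  also have "\<dots> = (\<Sum>i\<le>n. s ^ i / fact i * (t ^ (n - i) / fact (n - i)))"
  proof (rule sum.cong)
    fix i assume "i \<in> {..n}"
    hence "(of_nat (n choose i) :: real) = fact n / (fact i * fact (n - i))"
      by (intro binomial_fact) auto
    thus "of_nat (n choose i) * s ^ i * t ^ (n - i) / fact n = s ^ i / fact i * (t ^ (n - i) / fact (n - i))"
      by (simp add: field_simps)
  qed simp
  finally show ?thesis .
qed

lemma expop_add:
  fixes A :: "'n::finite rpoly \<Rightarrow> 'n rpoly"
  assumes lA: "lin A" and dA: "degpres A"
  shows "expop s A (expop t A p) = expop (s + t) A p"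
proof (rule poly_mapping_eqI)
  fix \<beta>
  let ?d = "pdeg p"
  let ?E = "expop t A p"
  define m where "m j \<gamma> = Poly_Mapping.lookup ((A ^^ j) (mon \<gamma>)) \<beta>" for j \<gamma>
  define u where "u \<gamma> j = s ^ j / fact j * m j \<gamma>" for \<gamma> j
  define v where "v \<gamma> k = t ^ k / fact k * Poly_Mapping.lookup ((A ^^ k) p) \<gamma>" for \<gamma> k
  have dp: "deg_le ?d p" by (rule deg_le_pdeg)
  have dE: "deg_le ?d ?E" using degpres_expop[OF lA dA] dp unfolding degpres_def by blast
  have dAk: "deg_le ?d ((A ^^ k) p)" for k using degpres_pow[OF dA] dp unfolding degpres_def by blast
  have su: "summable (u \<gamma>)" for \<gamma> unfolding u_def m_def by (rule summable_ser[OF lA dA])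
  have sua: "summable (\<lambda>j. norm (u \<gamma> j))" for \<gamma>
    unfolding u_def m_def real_norm_def by (rule summable_ser_abs[OF lA dA])
  have sva: "summable (\<lambda>j. norm (v \<gamma> j))" for \<gamma>
    unfolding v_def real_norm_def by (rule summable_ser_abs[OF lA dA])
  have Eg: "Poly_Mapping.lookup ?E \<gamma> = suminf (v \<gamma>)" for \<gamma>
    unfolding v_def by (rule lookup_expop[OF lA dA])

  have "Poly_Mapping.lookup (expop s A ?E) \<beta>
      = suminf (\<lambda>j. s ^ j / fact j * Poly_Mapping.lookup ((A ^^ j) ?E) \<beta>)"
    by (rule lookup_expop[OF lA dA])
  also have "\<dots> = suminf (\<lambda>j. \<Sum>\<gamma>\<in>MS ?d. suminf (v \<gamma>) * u \<gamma> j)"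
  proof -
    have "s ^ j / fact j * Poly_Mapping.lookup ((A ^^ j) ?E) \<beta> = (\<Sum>\<gamma>\<in>MS ?d. suminf (v \<gamma>) * u \<gamma> j)" for j
      unfolding lookup_lin_expand[OF lin_pow[OF lA] dE] Eg u_def m_def
      by (simp add: sum_distrib_left mult_ac)
    thus ?thesis by simp
  qed
  also have "\<dots> = (\<Sum>\<gamma>\<in>MS ?d. suminf (\<lambda>j. suminf (v \<gamma>) * u \<gamma> j))"
    by (rule suminf_sum) (intro summable_mult su)
  also have "\<dots> = (\<Sum>\<gamma>\<in>MS ?d. suminf (u \<gamma>) * suminf (v \<gamma>))"
    by (simp add: suminf_mult[OF su] mult.commute)
  also have "\<dots> = (\<Sum>\<gamma>\<in>MS ?d. suminf (\<lambda>n. \<Sum>i\<le>n. u \<gamma> i * v \<gamma> (n - i)))"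
    by (simp add: Cauchy_product[OF sua sva])
  also have "\<dots> = suminf (\<lambda>n. \<Sum>\<gamma>\<in>MS ?d. \<Sum>i\<le>n. u \<gamma> i * v \<gamma> (n - i))"
    by (rule suminf_sum[symmetric]) (rule summable_Cauchy_product[OF sua sva])
  also have "\<dots> = suminf (\<lambda>n. (s + t) ^ n / fact n * Poly_Mapping.lookup ((A ^^ n) p) \<beta>)"
  proof -
    have "(\<Sum>\<gamma>\<in>MS ?d. \<Sum>i\<le>n. u \<gamma> i * v \<gamma> (n - i))
        = (s + t) ^ n / fact n * Poly_Mapping.lookup ((A ^^ n) p) \<beta>" for n
    proof -
      have "(\<Sum>\<gamma>\<in>MS ?d. \<Sum>i\<le>n. u \<gamma> i * v \<gamma> (n - i))
          = (\<Sum>i\<le>n. \<Sum>\<gamma>\<in>MS ?d. u \<gamma> i * v \<gamma> (n - i))"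
        by (rule sum.swap)
      also have "\<dots> = (\<Sum>i\<le>n. s ^ i / fact i * (t ^ (n - i) / fact (n - i)) * Poly_Mapping.lookup ((A ^^ n) p) \<beta>)"
      proof (rule sum.cong)
        fix i assume i: "i \<in> {..n}"
        have "Poly_Mapping.lookup ((A ^^ n) p) \<beta> = Poly_Mapping.lookup ((A ^^ i) ((A ^^ (n - i)) p)) \<beta>"
        proof -
          have "(A ^^ n) = (A ^^ i) \<circ> (A ^^ (n - i))"
            using i funpow_add[of i "n - i" A] by simp
          thus ?thesis by simp
        qed
        also have "\<dots> = (\<Sum>\<gamma>\<in>MS ?d. Poly_Mapping.lookup ((A ^^ (n - i)) p) \<gamma> * m i \<gamma>)"
          unfolding m_def by (rule lookup_lin_expand[OF lin_pow[OF lA] dAk])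
        finally have eq: "Poly_Mapping.lookup ((A ^^ n) p) \<beta> = (\<Sum>\<gamma>\<in>MS ?d. Poly_Mapping.lookup ((A ^^ (n - i)) p) \<gamma> * m i \<gamma>)" .
        show "(\<Sum>\<gamma>\<in>MS ?d. u \<gamma> i * v \<gamma> (n - i)) = s ^ i / fact i * (t ^ (n - i) / fact (n - i)) * Poly_Mapping.lookup ((A ^^ n) p) \<beta>"
          unfolding eq u_def v_def by (simp add: sum_distrib_left mult_ac)
      qed simp
      also have "\<dots> = (s + t) ^ n / fact n * Poly_Mapping.lookup ((A ^^ n) p) \<beta>"
        by (simp add: binom_fact_sum sum_distrib_right)
      finally show ?thesis .
    qed
    thus ?thesis by simp
  qed
  also have "\<dots> = Poly_Mapping.lookup (expop (s + t) A p) \<beta>"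
    by (rule lookup_expop[OF lA dA, symmetric])
  finally show "Poly_Mapping.lookup (expop s A (expop t A p)) \<beta> = Poly_Mapping.lookup (expop (s + t) A p) \<beta>" .
qed

lemma expop_0:
  fixes A :: "'n::finite rpoly \<Rightarrow> 'n rpoly"
  assumes lA: "lin A" and dA: "degpres A"
  shows "expop 0 A p = p"
proof (rule poly_mapping_eqI)
  fix \<beta>
  have "(\<lambda>k. 0 ^ k / fact k * Poly_Mapping.lookup ((A ^^ k) p) \<beta>)
      = (\<lambda>k. if k = 0 then Poly_Mapping.lookup ((A ^^ k) p) \<beta> else 0)"
    by (auto simp: fun_eq_iff)
  moreover have "(\<lambda>k. if k = 0 then Poly_Mapping.lookup ((A ^^ k) p) \<beta> else 0) sums Poly_Mapping.lookup ((A ^^ 0) p) \<beta>"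
    by (rule sums_single)
  ultimately show "Poly_Mapping.lookup (expop 0 A p) \<beta> = Poly_Mapping.lookup p \<beta>"
    by (simp add: lookup_expop[OF lA dA] sums_iff)
qed

lemma expop_inj:
  fixes A :: "'n::finite rpoly \<Rightarrow> 'n rpoly"
  assumes lA: "lin A" and dA: "degpres A" and z: "expop t A p = 0"
  shows "p = 0"
proof -
  have "p = expop (- t + t) A p" by (simp add: expop_0[OF lA dA])
  also have "\<dots> = expop (- t) A (expop t A p)" by (rule expop_add[OF lA dA, symmetric])
  also have "\<dots> = 0" unfolding z by (rule lin_zero[OF lin_expop[OF lA dA]])
  finally show ?thesis .
qed


lemma cone_cmul: "convex_cone_rp C \<Longrightarrow> c \<ge> 0 \<Longrightarrow> p \<in> C \<Longrightarrow> cst c * p \<in> C"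
  by (metis convex_cone_rp_def smult_rp_cst)

lemma cone_add: "convex_cone_rp C \<Longrightarrow> p \<in> C \<Longrightarrow> r \<in> C \<Longrightarrow> p + r \<in> C"
  by (simp add: convex_cone_rp_def)

lemma cone_zero: "convex_cone_rp C \<Longrightarrow> 0 \<in> C"
  by (simp add: convex_cone_rp_def)

lemma tendsto_lookup_fun:
  assumes "\<And>\<beta>. ((\<lambda>N. Poly_Mapping.lookup (P N) \<beta>) \<longlongrightarrow> Poly_Mapping.lookup E \<beta>) sequentially"
  shows "((\<lambda>N. Poly_Mapping.lookup (P N)) \<longlongrightarrow> Poly_Mapping.lookup (E :: 'a \<Rightarrow>\<^sub>0 real)) sequentially"
proof -
  have "limitin (product_topology (\<lambda>i. euclidean) UNIV) (\<lambda>N. Poly_Mapping.lookup (P N)) (Poly_Mapping.lookup E) sequentially"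
    unfolding limitin_componentwise using assms by simp
  thus ?thesis unfolding euclidean_product_topology limitin_canonical_iff .
qed

lemma expop_preserves:
  fixes T :: "'n::finite rpoly \<Rightarrow> 'n rpoly"
  assumes cc: "convex_cone_rp C" and cl: "LF_closed C"
    and lT: "lin T" and dT: "degpres T" and TC: "\<And>p. p \<in> C \<Longrightarrow> T p \<in> C"
    and t: "t \<ge> 0" and p: "p \<in> C"
  shows "expop t T p \<in> C"
proof -
  let ?d = "pdeg p"
  let ?S = "{q \<in> C. deg_le ?d q}"
  define P where "P N = (\<Sum>k<N. cst (t ^ k / fact k) * (T ^^ k) p)" for N
  have TkC: "(T ^^ k) p \<in> C" for k
    by (induction k) (auto simp: p TC)
  have dTk: "deg_le ?d ((T ^^ k) p)" for k
    using degpres_pow[OF dT, of k] deg_le_pdeg[of p] unfolding degpres_def by blast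
  have PS: "P N \<in> ?S" for N
  proof (induction N)
    case 0 thus ?case by (simp add: P_def cone_zero[OF cc])
  next
    case (Suc N)
    have "P (Suc N) = P N + cst (t ^ N / fact N) * (T ^^ N) p" by (simp add: P_def)
    moreover have "cst (t ^ N / fact N) * (T ^^ N) p \<in> C"
      using t by (intro cone_cmul[OF cc] TkC) auto
    moreover have "deg_le ?d (cst (t ^ N / fact N) * (T ^^ N) p)"
      by (rule deg_le_cmul[OF dTk])
    ultimately show ?case using Suc by (auto intro: cone_add[OF cc] deg_le_add)
  qed
  have lim: "((\<lambda>N. Poly_Mapping.lookup (P N)) \<longlongrightarrow> Poly_Mapping.lookup (expop t T p)) sequentially"
  proof (rule tendsto_lookup_fun)
    fix \<beta>
    have "(\<lambda>N. Poly_Mapping.lookup (P N) \<beta>) = (\<lambda>N. \<Sum>k<N. t ^ k / fact k * Poly_Mapping.lookup ((T ^^ k) p) \<beta>)"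
      by (simp add: P_def lookup_sum)
    moreover have "(\<lambda>N. \<Sum>k<N. t ^ k / fact k * Poly_Mapping.lookup ((T ^^ k) p) \<beta>)
        \<longlonglongrightarrow> suminf (\<lambda>k. t ^ k / fact k * Poly_Mapping.lookup ((T ^^ k) p) \<beta>)"
      by (rule summable_LIMSEQ[OF summable_ser[OF lT dT]])
    ultimately show "(\<lambda>N. Poly_Mapping.lookup (P N) \<beta>) \<longlonglongrightarrow> Poly_Mapping.lookup (expop t T p) \<beta>"
      by (simp add: lookup_expop[OF lT dT])
  qed
  have "Poly_Mapping.lookup (expop t T p) \<in> Poly_Mapping.lookup ` ?S"
  proof (rule Lim_in_closed_set[OF _ _ _ lim])
    show "closed (Poly_Mapping.lookup ` ?S)" using cl by (simp add: LF_closed_def)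
    show "\<forall>\<^sub>F x in sequentially. Poly_Mapping.lookup (P x) \<in> Poly_Mapping.lookup ` ?S"
      using PS by (intro always_eventually allI imageI)
  qed simp
  then obtain q where "q \<in> ?S" "Poly_Mapping.lookup (expop t T p) = Poly_Mapping.lookup q" by blast
  thus ?thesis by (metis (no_types, lifting) mem_Collect_eq poly_mapping.lookup_inject)
qed

theorem corollary5p6:
  fixes C :: "'n::finite rpoly set"
  assumes "convex_cone_rp C" and "LF_closed C"
  shows "Dops_C C \<subseteq> dops_C C"
proof
  fix T assume T: "T \<in> Dops_C C"
  hence Td: "T \<in> dops" and TC: "\<And>p. p \<in> C \<Longrightarrow> T p \<in> C"
    by (auto simp: Dops_C_def Dops_def)
  have lT: "lin T" and dT: "degpres T" using Td by (auto intro: dops_lin dops_degpres)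
  show "T \<in> dops_C C"
    unfolding dops_C_def
  proof (intro CollectI conjI allI impI Td)
    fix t :: real assume t: "t \<ge> 0"
    have "expop t T \<in> Dops"
      unfolding Dops_def using expop_dops[OF Td] expop_inj[OF lT dT] by blast
    moreover have "\<forall>p\<in>C. expop t T p \<in> C"
      using expop_preserves[OF assms lT dT TC t] by blast
    ultimately show "expop t T \<in> Dops_C C" by (simp add: Dops_C_def)
  qed
qed

end
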